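(* Let $M$ be a principally Goldie*-lifting right $R$-module having the summand sum property. Then every direct summand of $M$ is principally Goldie*-lifting.
   Context: $R$ is an associative ring with identity; modules are unital right $R$-modules. $M$ has the summand sum property (SSP) if the sum of any two direct summands of $M$ is a direct summand of $M$. $K\ll L$ means $K$ is small in $L$. For submodules $X,Y$ of a module $L$, $X\,\beta^*\,Y$ means $(X+Y)/X\ll L/X$ and $(X+Y)/Y\ll L/Y$. A module $L$ is principally Goldie*-lifting if for every cyclic submodule $X$ of $L$ there is a direct summand $D$ of $L$ with $X\,\beta^*\,D$. *)

theory Defs
  imports Main
begin

record ('r, 'm) rmod =
  mcarrier :: "'m set"
  mzero :: 'm
  madd :: "'m \<Rightarrow> 'm \<Rightarrow> 'm"
  mneg :: "'m \<Rightarrow> 'm"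
  msmul :: "'m \<Rightarrow> 'r \<Rightarrow> 'm"

definition right_module :: "('r::ring_1, 'm) rmod \<Rightarrow> bool" where
  "right_module M \<longleftrightarrow>
     mzero M \<in> mcarrier M \<and>
     (\<forall>x\<in>mcarrier M. \<forall>y\<in>mcarrier M. madd M x y \<in> mcarrier M) \<and>
     (\<forall>x\<in>mcarrier M. mneg M x \<in> mcarrier M) \<and>
     (\<forall>x\<in>mcarrier M. \<forall>r. msmul M x r \<in> mcarrier M) \<and>
     (\<forall>x\<in>mcarrier M. \<forall>y\<in>mcarrier M. \<forall>z\<in>mcarrier M.
        madd M (madd M x y) z = madd M x (madd M y z)) \<and>
     (\<forall>x\<in>mcarrier M. \<forall>y\<in>mcarrier M. madd M x y = madd M y x) \<and>
     (\<forall>x\<in>mcarrier M. madd M (mzero M) x = x) \<and>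
     (\<forall>x\<in>mcarrier M. madd M (mneg M x) x = mzero M) \<and>
     (\<forall>x\<in>mcarrier M. msmul M x 1 = x) \<and>
     (\<forall>x\<in>mcarrier M. \<forall>r s. msmul M (msmul M x r) s = msmul M x (r * s)) \<and>
     (\<forall>x\<in>mcarrier M. \<forall>y\<in>mcarrier M. \<forall>r.
        msmul M (madd M x y) r = madd M (msmul M x r) (msmul M y r)) \<and>
     (\<forall>x\<in>mcarrier M. \<forall>r s.
        msmul M x (r + s) = madd M (msmul M x r) (msmul M x s))"

definition submodule :: "('r, 'm) rmod \<Rightarrow> 'm set \<Rightarrow> bool" where
  "submodule M X \<longleftrightarrow> X \<subseteq> mcarrier M \<and> mzero M \<in> X \<and>
     (\<forall>x\<in>X. \<forall>y\<in>X. madd M x y \<in> X) \<and> (\<forall>x\<in>X. mneg M x \<in> X) \<and>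
     (\<forall>x\<in>X. \<forall>r. msmul M x r \<in> X)"

definition msum :: "('r, 'm) rmod \<Rightarrow> 'm set \<Rightarrow> 'm set \<Rightarrow> 'm set" where
  "msum M X Y = {madd M x y | x y. x \<in> X \<and> y \<in> Y}"

definition small :: "('r, 'm) rmod \<Rightarrow> 'm set \<Rightarrow> bool" where
  "small M K \<longleftrightarrow> submodule M K \<and>
     (\<forall>N. submodule M N \<and> msum M K N = mcarrier M \<longrightarrow> N = mcarrier M)"

definition direct_summand :: "('r, 'm) rmod \<Rightarrow> 'm set \<Rightarrow> bool" where
  "direct_summand M D \<longleftrightarrow> submodule M D \<and>
     (\<exists>E. submodule M E \<and> msum M D E = mcarrier M \<and> D \<inter> E = {mzero M})"

definition SSP :: "('r, 'm) rmod \<Rightarrow> bool" where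
  "SSP M \<longleftrightarrow> (\<forall>D1 D2. direct_summand M D1 \<and> direct_summand M D2 \<longrightarrow>
                          direct_summand M (msum M D1 D2))"

definition cyclic_submodule :: "('r, 'm) rmod \<Rightarrow> 'm set \<Rightarrow> bool" where
  "cyclic_submodule M X \<longleftrightarrow> (\<exists>x\<in>mcarrier M. X = {msmul M x r | r. True})"

definition coset :: "('r, 'm) rmod \<Rightarrow> 'm set \<Rightarrow> 'm \<Rightarrow> 'm set" where
  "coset M X a = {madd M a x | x. x \<in> X}"

definition quot :: "('r, 'm) rmod \<Rightarrow> 'm set \<Rightarrow> ('r, 'm set) rmod" where
  "quot M X = \<lparr> mcarrier = coset M X ` mcarrier M,
               mzero = X,
               madd = (\<lambda>A B. coset M X (madd M (SOME a. a \<in> A) (SOME b. b \<in> B))),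
               mneg = (\<lambda>A. coset M X (mneg M (SOME a. a \<in> A))),
               msmul = (\<lambda>A r. coset M X (msmul M (SOME a. a \<in> A) r)) \<rparr>"

definition beta_star :: "('r, 'm) rmod \<Rightarrow> 'm set \<Rightarrow> 'm set \<Rightarrow> bool" where
  "beta_star M X Y \<longleftrightarrow>
     small (quot M X) (coset M X ` msum M X Y) \<and>
     small (quot M Y) (coset M Y ` msum M X Y)"

definition principally_goldie_star_lifting :: "('r, 'm) rmod \<Rightarrow> bool" where
  "principally_goldie_star_lifting M \<longleftrightarrow>
     (\<forall>X. cyclic_submodule M X \<longrightarrow> (\<exists>D. direct_summand M D \<and> beta_star M X D))"

definition submod :: "('r, 'm) rmod \<Rightarrow> 'm set \<Rightarrow> ('r, 'm) rmod" where
  "submod M D = M\<lparr>mcarrier := D\<rparr>"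

end

theory Submission
  imports Defs
begin


locale RM =
  fixes M :: "('r::ring_1, 'm) rmod"
  assumes rm: "right_module M"
begin

lemma zero_closed[simp,intro]: "mzero M \<in> mcarrier M"
  using rm unfolding right_module_def by auto
lemma add_closed[simp,intro]: "x \<in> mcarrier M \<Longrightarrow> y \<in> mcarrier M \<Longrightarrow> madd M x y \<in> mcarrier M"
  using rm unfolding right_module_def by auto
lemma neg_closed[simp,intro]: "x \<in> mcarrier M \<Longrightarrow> mneg M x \<in> mcarrier M"
  using rm unfolding right_module_def by auto
lemma smul_closed[simp,intro]: "x \<in> mcarrier M \<Longrightarrow> msmul M x r \<in> mcarrier M"
  using rm unfolding right_module_def by auto
lemma assoc: "x \<in> mcarrier M \<Longrightarrow> y \<in> mcarrier M \<Longrightarrow> z \<in> mcarrier M \<Longrightarrow>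
   madd M (madd M x y) z = madd M x (madd M y z)"
  using rm unfolding right_module_def by auto
lemma comm: "x \<in> mcarrier M \<Longrightarrow> y \<in> mcarrier M \<Longrightarrow> madd M x y = madd M y x"
  using rm unfolding right_module_def by auto
lemma zero_left[simp]: "x \<in> mcarrier M \<Longrightarrow> madd M (mzero M) x = x"
  using rm unfolding right_module_def by auto
lemma neg_left[simp]: "x \<in> mcarrier M \<Longrightarrow> madd M (mneg M x) x = mzero M"
  using rm unfolding right_module_def by auto
lemma smul_one[simp]: "x \<in> mcarrier M \<Longrightarrow> msmul M x 1 = x"
  using rm unfolding right_module_def by auto
lemma smul_smul: "x \<in> mcarrier M \<Longrightarrow> msmul M (msmul M x r) s = msmul M x (r * s)"
  using rm unfolding right_module_def by auto
lemma smul_distr: "x \<in> mcarrier M \<Longrightarrow> y \<in> mcarrier M \<Longrightarrow>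
   msmul M (madd M x y) r = madd M (msmul M x r) (msmul M y r)"
  using rm unfolding right_module_def by auto
lemma smul_distr2: "x \<in> mcarrier M \<Longrightarrow> msmul M x (r + s) = madd M (msmul M x r) (msmul M x s)"
  using rm unfolding right_module_def by auto

lemma zero_right[simp]: "x \<in> mcarrier M \<Longrightarrow> madd M x (mzero M) = x"
  using comm zero_left zero_closed by metis
lemma neg_right[simp]: "x \<in> mcarrier M \<Longrightarrow> madd M x (mneg M x) = mzero M"
  by (metis comm neg_left neg_closed)
lemma cancel1[simp]: "x \<in> mcarrier M \<Longrightarrow> y \<in> mcarrier M \<Longrightarrow> madd M (mneg M x) (madd M x y) = y"
  by (metis assoc neg_left zero_left neg_closed)
lemma cancel2[simp]: "x \<in> mcarrier M \<Longrightarrow> y \<in> mcarrier M \<Longrightarrow> madd M x (madd M (mneg M x) y) = y"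
  by (metis assoc neg_right zero_left neg_closed)
lemma cancel3[simp]: "x \<in> mcarrier M \<Longrightarrow> y \<in> mcarrier M \<Longrightarrow> madd M (madd M x y) (mneg M y) = x"
  by (metis assoc neg_right zero_right neg_closed)
lemma neg_unique: "x \<in> mcarrier M \<Longrightarrow> y \<in> mcarrier M \<Longrightarrow> madd M x y = mzero M \<Longrightarrow> y = mneg M x"
  by (metis cancel1 zero_right neg_closed)
lemma neg_add: "x \<in> mcarrier M \<Longrightarrow> y \<in> mcarrier M \<Longrightarrow>
   mneg M (madd M x y) = madd M (mneg M x) (mneg M y)"
proof -
  assume x: "x \<in> mcarrier M" and y: "y \<in> mcarrier M"
  have "madd M (madd M x y) (madd M (mneg M x) (mneg M y)) = mzero M"
    using x y by (metis assoc comm cancel2 neg_closed neg_right add_closed)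
  then show ?thesis using x y neg_unique by (metis add_closed neg_closed)
qed
lemma swap4: "a \<in> mcarrier M \<Longrightarrow> b \<in> mcarrier M \<Longrightarrow> c \<in> mcarrier M \<Longrightarrow> d \<in> mcarrier M \<Longrightarrow>
  madd M (madd M a b) (madd M c d) = madd M (madd M a c) (madd M b d)"
  by (metis assoc comm add_closed)
lemma smul_zero: "x \<in> mcarrier M \<Longrightarrow> msmul M x 0 = mzero M"
proof -
  assume x: "x \<in> mcarrier M"
  have "msmul M x 0 = madd M (msmul M x 0) (msmul M x 0)" using smul_distr2[OF x, of 0 0] by simp
  then show ?thesis using x by (metis cancel3 neg_right smul_closed)
qed
lemma smul_neg: "x \<in> mcarrier M \<Longrightarrow> mneg M (msmul M x r) = msmul M x (- r)"
proof -
  assume x: "x \<in> mcarrier M"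
  have "madd M (msmul M x r) (msmul M x (- r)) = mzero M"
    using smul_distr2[OF x, of r "- r"] smul_zero[OF x] by simp
  then show ?thesis using x neg_unique by (metis smul_closed)
qed

end



context RM
begin

lemma subD:
  assumes "submodule M X"
  shows "X \<subseteq> mcarrier M" "mzero M \<in> X" "\<And>x y. x \<in> X \<Longrightarrow> y \<in> X \<Longrightarrow> madd M x y \<in> X"
    "\<And>x. x \<in> X \<Longrightarrow> mneg M x \<in> X" "\<And>x r. x \<in> X \<Longrightarrow> msmul M x r \<in> X"
  using assms unfolding submodule_def by auto

lemma msum_iff: "z \<in> msum M A B \<longleftrightarrow> (\<exists>a b. z = madd M a b \<and> a \<in> A \<and> b \<in> B)"
  unfolding msum_def by auto

lemma msum_sub:
  assumes A: "submodule M A" and B: "submodule M B"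
  shows "submodule M (msum M A B)"
proof -
  note a = subD[OF A] and b = subD[OF B]
  have c: "\<And>x. x \<in> A \<Longrightarrow> x \<in> mcarrier M" "\<And>x. x \<in> B \<Longrightarrow> x \<in> mcarrier M"
    using a(1) b(1) by auto
  have 1: "msum M A B \<subseteq> mcarrier M" unfolding msum_def using c by auto
  have 2: "mzero M \<in> msum M A B" unfolding msum_iff
    by (rule exI[of _ "mzero M"], rule exI[of _ "mzero M"]) (simp add: a(2) b(2))
  have 3: "madd M x y \<in> msum M A B" if hx: "x \<in> msum M A B" "y \<in> msum M A B" for x y
  proof -
    obtain a1 b1 a2 b2 where h: "x = madd M a1 b1" "y = madd M a2 b2" "a1 \<in> A" "a2 \<in> A" "b1 \<in> B" "b2 \<in> B"
      using hx unfolding msum_iff by blast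
    have "madd M x y = madd M (madd M a1 a2) (madd M b1 b2)"
      using h swap4 c by metis
    moreover have "madd M a1 a2 \<in> A" "madd M b1 b2 \<in> B" using h a(3) b(3) by auto
    ultimately show ?thesis unfolding msum_iff by blast
  qed
  have 4: "mneg M x \<in> msum M A B" if hx: "x \<in> msum M A B" for x
  proof -
    obtain a1 b1 where h: "x = madd M a1 b1" "a1 \<in> A" "b1 \<in> B"
      using hx unfolding msum_iff by blast
    have "mneg M x = madd M (mneg M a1) (mneg M b1)"
      using h neg_add c by metis
    moreover have "mneg M a1 \<in> A" "mneg M b1 \<in> B" using h a(4) b(4) by auto
    ultimately show ?thesis unfolding msum_iff by blast
  qed
  have 5: "msmul M x r \<in> msum M A B" if hx: "x \<in> msum M A B" for x r
  proof -
    obtain a1 b1 where h: "x = madd M a1 b1" "a1 \<in> A" "b1 \<in> B"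
      using hx unfolding msum_iff by blast
    have "msmul M x r = madd M (msmul M a1 r) (msmul M b1 r)"
      using h smul_distr c by metis
    moreover have "msmul M a1 r \<in> A" "msmul M b1 r \<in> B" using h a(5) b(5) by auto
    ultimately show ?thesis unfolding msum_iff by blast
  qed
  show ?thesis unfolding submodule_def using 1 2 3 4 5 by blast
qed

lemma msum_least: "submodule M T \<Longrightarrow> A \<subseteq> T \<Longrightarrow> B \<subseteq> T \<Longrightarrow> msum M A B \<subseteq> T"
  unfolding msum_def using subD(3)[of T] by auto

lemma msum_upper1: "submodule M B \<Longrightarrow> A \<subseteq> mcarrier M \<Longrightarrow> A \<subseteq> msum M A B"
proof
  fix x assume B: "submodule M B" and A: "A \<subseteq> mcarrier M" and x: "x \<in> A"
  have "x = madd M x (mzero M)" using x A by auto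
  then show "x \<in> msum M A B" unfolding msum_iff using x subD(2)[OF B] by blast
qed

lemma msum_upper2: "submodule M A \<Longrightarrow> B \<subseteq> mcarrier M \<Longrightarrow> B \<subseteq> msum M A B"
proof
  fix x assume B: "submodule M A" and A: "B \<subseteq> mcarrier M" and x: "x \<in> B"
  have "x = madd M (mzero M) x" using x A by auto
  then show "x \<in> msum M A B" unfolding msum_iff using x subD(2)[OF B] by blast
qed

lemma msum_comm: "A \<subseteq> mcarrier M \<Longrightarrow> B \<subseteq> mcarrier M \<Longrightarrow> msum M A B = msum M B A"
  unfolding msum_iff set_eq_iff by (metis comm subsetD)

lemma msum_carrier: "A \<subseteq> mcarrier M \<Longrightarrow> B \<subseteq> mcarrier M \<Longrightarrow> msum M A B \<subseteq> mcarrier M"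
  unfolding msum_def by auto

lemma modular:
  assumes A: "submodule M A" and B: "submodule M B" and C: "submodule M C" and AC: "A \<subseteq> C"
  shows "C \<inter> msum M A B = msum M A (C \<inter> B)"
proof
  show "C \<inter> msum M A B \<subseteq> msum M A (C \<inter> B)"
  proof
    fix z assume "z \<in> C \<inter> msum M A B"
    then obtain a b where z: "z \<in> C" "z = madd M a b" "a \<in> A" "b \<in> B" using msum_iff by blast
    have ac: "a \<in> mcarrier M" "b \<in> mcarrier M" using z subD(1)[OF A] subD(1)[OF B] by auto
    have "b = madd M (mneg M a) z" using z ac by simp
    moreover have "madd M (mneg M a) z \<in> C" using z AC subD[OF C] by auto
    ultimately show "z \<in> msum M A (C \<inter> B)" unfolding msum_iff using z by auto
  qed
  show "msum M A (C \<inter> B) \<subseteq> C \<inter> msum M A B"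
    using AC subD(3)[OF C] unfolding msum_def by blast
qed

lemma msum_zero: "A \<subseteq> mcarrier M \<Longrightarrow> msum M A {mzero M} = A"
proof
  assume A: "A \<subseteq> mcarrier M"
  show "msum M A {mzero M} \<subseteq> A" unfolding msum_def using A by auto
  show "A \<subseteq> msum M A {mzero M}"
  proof
    fix x assume x: "x \<in> A"
    have "x = madd M x (mzero M)" using x A by auto
    then show "x \<in> msum M A {mzero M}" unfolding msum_iff using x by blast
  qed
qed

lemma cyclic_sub: "x \<in> mcarrier M \<Longrightarrow> submodule M {msmul M x r | r. True}"
  unfolding submodule_def
  apply (intro conjI ballI allI)
      apply auto[1]
     apply (metis (mono_tags, lifting) mem_Collect_eq smul_zero)
    apply (auto simp: smul_distr2[symmetric] smul_neg smul_smul)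
  done

lemma coset_iff: "b \<in> coset M X a \<longleftrightarrow> (\<exists>x\<in>X. b = madd M a x)"
  unfolding coset_def by auto

lemma coset_sub: "submodule M X \<Longrightarrow> a \<in> mcarrier M \<Longrightarrow> coset M X a \<subseteq> mcarrier M"
  unfolding coset_def using subD(1) by auto

lemma coset_self: "submodule M X \<Longrightarrow> a \<in> mcarrier M \<Longrightarrow> a \<in> coset M X a"
  unfolding coset_iff using subD(2) zero_right by metis

lemma coset_eq:
  assumes X: "submodule M X" and a: "a \<in> mcarrier M" and b: "b \<in> coset M X a"
  shows "coset M X b = coset M X a"
proof -
  note s = subD[OF X]
  obtain x where x: "x \<in> X" "b = madd M a x" using b coset_iff by auto
  have xc: "x \<in> mcarrier M" using x s(1) by auto
  show ?thesis
  proof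
    show "coset M X b \<subseteq> coset M X a"
    proof
      fix z assume "z \<in> coset M X b"
      then obtain y where y: "y \<in> X" "z = madd M b y" using coset_iff by auto
      have "z = madd M a (madd M x y)" using y x xc a s(1) assoc by auto
      then show "z \<in> coset M X a" using coset_iff s(3) x y by auto
    qed
    show "coset M X a \<subseteq> coset M X b"
    proof
      fix z assume "z \<in> coset M X a"
      then obtain y where y: "y \<in> X" "z = madd M a y" using coset_iff by auto
      have yc: "y \<in> mcarrier M" using y s(1) by auto
      have "z = madd M b (madd M (mneg M x) y)" using y x xc yc a assoc by simp
      then show "z \<in> coset M X b" using coset_iff s x y by auto
    qed
  qed
qed

lemma coset_zero: "submodule M X \<Longrightarrow> coset M X (mzero M) = X"
  unfolding coset_def using subD(1) by force

lemma coset_some: "submodule M X \<Longrightarrow> a \<in> mcarrier M \<Longrightarrow> (SOME b. b \<in> coset M X a) \<in> coset M X a"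
  using coset_self by (metis someI)

lemma quot_add:
  assumes X: "submodule M X" and a: "a \<in> mcarrier M" and b: "b \<in> mcarrier M"
  shows "madd (quot M X) (coset M X a) (coset M X b) = coset M X (madd M a b)"
proof -
  note s = subD[OF X]
  obtain x where x: "x \<in> X" "(SOME c. c \<in> coset M X a) = madd M a x" using coset_some[OF X a] coset_iff by auto
  obtain y where y: "y \<in> X" "(SOME c. c \<in> coset M X b) = madd M b y" using coset_some[OF X b] coset_iff by auto
  have c: "x \<in> mcarrier M" "y \<in> mcarrier M" using x y s(1) by auto
  have "madd M (madd M a x) (madd M b y) = madd M (madd M a b) (madd M x y)"
    using swap4 a b c by auto
  then have "madd M (madd M a x) (madd M b y) \<in> coset M X (madd M a b)"
    using coset_iff s(3) x y by auto
  then have "coset M X (madd M (madd M a x) (madd M b y)) = coset M X (madd M a b)"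
    using coset_eq[OF X] a b by blast
  then show ?thesis using x y by (simp add: quot_def)
qed

lemma quot_neg:
  assumes X: "submodule M X" and a: "a \<in> mcarrier M"
  shows "mneg (quot M X) (coset M X a) = coset M X (mneg M a)"
proof -
  note s = subD[OF X]
  obtain x where x: "x \<in> X" "(SOME c. c \<in> coset M X a) = madd M a x" using coset_some[OF X a] coset_iff by auto
  have c: "x \<in> mcarrier M" using x s(1) by auto
  have "mneg M (madd M a x) \<in> coset M X (mneg M a)"
    using coset_iff s(4) x neg_add a c by auto
  then have "coset M X (mneg M (madd M a x)) = coset M X (mneg M a)"
    using coset_eq[OF X] a by blast
  then show ?thesis using x by (simp add: quot_def)
qed

lemma quot_smul:
  assumes X: "submodule M X" and a: "a \<in> mcarrier M"
  shows "msmul (quot M X) (coset M X a) r = coset M X (msmul M a r)"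
proof -
  note s = subD[OF X]
  obtain x where x: "x \<in> X" "(SOME c. c \<in> coset M X a) = madd M a x" using coset_some[OF X a] coset_iff by auto
  have c: "x \<in> mcarrier M" using x s(1) by auto
  have "msmul M (madd M a x) r \<in> coset M X (msmul M a r)"
    using coset_iff s(5) x smul_distr a c by auto
  then have "coset M X (msmul M (madd M a x) r) = coset M X (msmul M a r)"
    using coset_eq[OF X] a by blast
  then show ?thesis using x by (simp add: quot_def)
qed

end



lemma msumE: "z \<in> msum M A B \<Longrightarrow> (\<And>a b. z = madd M a b \<Longrightarrow> a \<in> A \<Longrightarrow> b \<in> B \<Longrightarrow> P) \<Longrightarrow> P"
  unfolding msum_def by blast
lemma msumI: "a \<in> A \<Longrightarrow> b \<in> B \<Longrightarrow> madd M a b \<in> msum M A B"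
  unfolding msum_def by blast

context RM
begin

lemma quot_carrier[simp]: "mcarrier (quot M X) = coset M X ` mcarrier M"
  by (simp add: quot_def)
lemma quot_zero[simp]: "mzero (quot M X) = X"
  by (simp add: quot_def)

lemma coset_in: "submodule M L \<Longrightarrow> X \<subseteq> L \<Longrightarrow> l \<in> L \<Longrightarrow> coset M X l \<subseteq> L"
  unfolding coset_def using subD(3)[of L] by blast

lemma image_sub:
  assumes X: "submodule M X" and L: "submodule M L" and XL: "X \<subseteq> L"
  shows "submodule (quot M X) (coset M X ` L)"
proof -
  note l = subD[OF L]
  have c: "\<And>x. x \<in> L \<Longrightarrow> x \<in> mcarrier M" using l(1) by auto
  have 1: "coset M X ` L \<subseteq> mcarrier (quot M X)" using l(1) by (simp add: image_mono)
  have "coset M X (mzero M) \<in> coset M X ` L" using l(2) by blast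
  then have 2: "mzero (quot M X) \<in> coset M X ` L" using coset_zero[OF X] by simp
  have 3: "madd (quot M X) A B \<in> coset M X ` L" if h: "A \<in> coset M X ` L" "B \<in> coset M X ` L" for A B
  proof -
    obtain a where a: "A = coset M X a" "a \<in> L" using h(1) by (rule imageE)
    obtain b where b: "B = coset M X b" "b \<in> L" using h(2) by (rule imageE)
    have "madd (quot M X) A B = coset M X (madd M a b)" using quot_add[OF X, of a b] c[of a] c[of b] a b by simp
    moreover have "madd M a b \<in> L" using l(3) a b by simp
    ultimately show ?thesis by (metis imageI)
  qed
  have 4: "mneg (quot M X) A \<in> coset M X ` L" if h: "A \<in> coset M X ` L" for A
  proof -
    obtain a where a: "A = coset M X a" "a \<in> L" using h by (rule imageE)
    have "mneg (quot M X) A = coset M X (mneg M a)" using quot_neg[OF X, of a] c[of a] a by simp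
    moreover have "mneg M a \<in> L" using l(4) a by simp
    ultimately show ?thesis by (metis imageI)
  qed
  have 5: "msmul (quot M X) A r \<in> coset M X ` L" if h: "A \<in> coset M X ` L" for A r
  proof -
    obtain a where a: "A = coset M X a" "a \<in> L" using h by (rule imageE)
    have "msmul (quot M X) A r = coset M X (msmul M a r)" using quot_smul[OF X, of a r] c[of a] a by simp
    moreover have "msmul M a r \<in> L" using l(5) a by simp
    ultimately show ?thesis by (metis imageI)
  qed
  show ?thesis unfolding submodule_def by (intro conjI 1 2 ballI allI 3 4 5)
qed

lemma msum_quot:
  assumes X: "submodule M X" and K: "K \<subseteq> mcarrier M" and L: "L \<subseteq> mcarrier M"
  shows "msum (quot M X) (coset M X ` K) (coset M X ` L) = coset M X ` msum M K L"
proof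
  show "msum (quot M X) (coset M X ` K) (coset M X ` L) \<subseteq> coset M X ` msum M K L"
  proof
    fix z assume "z \<in> msum (quot M X) (coset M X ` K) (coset M X ` L)"
    then obtain A B where AB: "z = madd (quot M X) A B" "A \<in> coset M X ` K" "B \<in> coset M X ` L"
      by (rule msumE)
    obtain k where k: "A = coset M X k" "k \<in> K" using AB(2) by (rule imageE)
    obtain l where l: "B = coset M X l" "l \<in> L" using AB(3) by (rule imageE)
    have h: "z = madd (quot M X) (coset M X k) (coset M X l)" "k \<in> K" "l \<in> L"
      using AB k l by simp_all
    then have "z = coset M X (madd M k l)" using quot_add[OF X, of k l] K L by (simp add: subsetD)
    moreover have "madd M k l \<in> msum M K L" using h by (simp add: msumI)
    ultimately show "z \<in> coset M X ` msum M K L" by (metis imageI)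
  qed
  show "coset M X ` msum M K L \<subseteq> msum (quot M X) (coset M X ` K) (coset M X ` L)"
  proof
    fix z assume "z \<in> coset M X ` msum M K L"
    then obtain w where w: "z = coset M X w" "w \<in> msum M K L" by (rule imageE)
    obtain k l where h: "w = madd M k l" "k \<in> K" "l \<in> L"
      using w(2) by (rule msumE)
    then have "z = madd (quot M X) (coset M X k) (coset M X l)" using w quot_add[OF X, of k l] K L by (simp add: subsetD)
    moreover have "coset M X k \<in> coset M X ` K" "coset M X l \<in> coset M X ` L" using h by simp_all
    ultimately show "z \<in> msum (quot M X) (coset M X ` K) (coset M X ` L)" by (simp add: msumI)
  qed
qed

lemma small_quot_iff:
  assumes X: "submodule M X" and K: "submodule M K" and XK: "X \<subseteq> K"
  shows "small (quot M X) (coset M X ` K) \<longleftrightarrow>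
    (\<forall>L. submodule M L \<and> X \<subseteq> L \<and> msum M K L = mcarrier M \<longrightarrow> L = mcarrier M)"
proof
  have Kc: "K \<subseteq> mcarrier M" using subD(1)[OF K] .
  assume sm: "small (quot M X) (coset M X ` K)"
  have smN: "\<forall>N. submodule (quot M X) N \<and> msum (quot M X) (coset M X ` K) N = mcarrier (quot M X)
     \<longrightarrow> N = mcarrier (quot M X)" using sm unfolding small_def by (rule conjunct2)
  show "\<forall>L. submodule M L \<and> X \<subseteq> L \<and> msum M K L = mcarrier M \<longrightarrow> L = mcarrier M"
  proof (intro allI impI)
    fix L assume h: "submodule M L \<and> X \<subseteq> L \<and> msum M K L = mcarrier M"
    have Lc: "L \<subseteq> mcarrier M" using h subD(1) by blast
    have Ls: "submodule (quot M X) (coset M X ` L)" using image_sub[OF X] h by blast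
    have "msum (quot M X) (coset M X ` K) (coset M X ` L) = coset M X ` msum M K L"
      by (rule msum_quot[OF X Kc Lc])
    then have "msum (quot M X) (coset M X ` K) (coset M X ` L) = mcarrier (quot M X)"
      using h by simp
    then have "coset M X ` L = mcarrier (quot M X)" using smN Ls by blast
    then have eq: "coset M X ` L = coset M X ` mcarrier M" by simp
    show "L = mcarrier M"
    proof
      show "L \<subseteq> mcarrier M" by fact
      show "mcarrier M \<subseteq> L"
      proof
        fix m assume m: "m \<in> mcarrier M"
        then have "coset M X m \<in> coset M X ` L" using eq by simp
        then obtain l where l: "coset M X m = coset M X l" "l \<in> L" by (rule imageE)
        then have "m \<in> coset M X l" using coset_self[OF X m] by simp
        moreover have "coset M X l \<subseteq> L" using coset_in[of L X l] h l by blast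
        ultimately show "m \<in> L" by (rule subsetD[rotated])
      qed
    qed
  qed
next
  assume P: "\<forall>L. submodule M L \<and> X \<subseteq> L \<and> msum M K L = mcarrier M \<longrightarrow> L = mcarrier M"
  have Kc: "K \<subseteq> mcarrier M" using subD(1)[OF K] .
  have Ks: "submodule (quot M X) (coset M X ` K)" using image_sub[OF X K XK] .
  show "small (quot M X) (coset M X ` K)" unfolding small_def
  proof (intro conjI allI impI)
    show "submodule (quot M X) (coset M X ` K)" by fact
    fix N assume hN: "submodule (quot M X) N \<and> msum (quot M X) (coset M X ` K) N = mcarrier (quot M X)"
    have Nc: "N \<subseteq> coset M X ` mcarrier M" and nz: "X \<in> N"
      and nadd: "\<And>A B. A \<in> N \<Longrightarrow> B \<in> N \<Longrightarrow> madd (quot M X) A B \<in> N"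
      and nneg: "\<And>A. A \<in> N \<Longrightarrow> mneg (quot M X) A \<in> N"
      and nsm: "\<And>A r. A \<in> N \<Longrightarrow> msmul (quot M X) A r \<in> N"
      using conjunct1[OF hN] unfolding submodule_def by simp_all
    have NS: "msum (quot M X) (coset M X ` K) N = coset M X ` mcarrier M" using conjunct2[OF hN] by simp
    define L where "L = {m \<in> mcarrier M. coset M X m \<in> N}"
    have memL: "\<And>m. m \<in> L \<longleftrightarrow> m \<in> mcarrier M \<and> coset M X m \<in> N" unfolding L_def by simp
    have NL: "N = coset M X ` L"
    proof
      show "N \<subseteq> coset M X ` L"
      proof
        fix A assume A: "A \<in> N"
        then obtain a where a: "A = coset M X a" "a \<in> mcarrier M" using Nc by blast
        then have "a \<in> L" using memL A by simp
        then show "A \<in> coset M X ` L" using a by simp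
      qed
      show "coset M X ` L \<subseteq> N" using memL by blast
    qed
    have Ls: "submodule M L"
      unfolding submodule_def
    proof (intro conjI ballI allI)
      show "L \<subseteq> mcarrier M" using memL by blast
      show "mzero M \<in> L" using memL coset_zero[OF X] nz by simp
    next
      fix x y assume h: "x \<in> L" "y \<in> L"
      then have "madd (quot M X) (coset M X x) (coset M X y) \<in> N" using memL nadd by blast
      then show "madd M x y \<in> L" using h memL quot_add[OF X] by simp
    next
      fix x assume h: "x \<in> L"
      then have "mneg (quot M X) (coset M X x) \<in> N" using memL nneg by blast
      then show "mneg M x \<in> L" using h memL quot_neg[OF X] by simp
    next
      fix x r assume h: "x \<in> L"
      then have "msmul (quot M X) (coset M X x) r \<in> N" using memL nsm by blast
      then show "msmul M x r \<in> L" using h memL quot_smul[OF X] by simp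
    qed
    have XL: "X \<subseteq> L"
    proof
      fix x assume x: "x \<in> X"
      have xc: "x \<in> mcarrier M" using x subD(1)[OF X] by blast
      have "x \<in> coset M X (mzero M)" using x coset_zero[OF X] by simp
      then have "coset M X x = X" using coset_eq[OF X zero_closed] coset_zero[OF X] by simp
      then show "x \<in> L" using memL xc nz by simp
    qed
    have Lc: "L \<subseteq> mcarrier M" using memL by blast
    have "msum M K L = mcarrier M"
    proof
      show "msum M K L \<subseteq> mcarrier M" using msum_carrier[OF Kc Lc] .
      show "mcarrier M \<subseteq> msum M K L"
      proof
        fix m assume m: "m \<in> mcarrier M"
        have "coset M X m \<in> coset M X ` mcarrier M" using m by simp
        then have "coset M X m \<in> coset M X ` msum M K L"
          using NS NL msum_quot[OF X Kc Lc] by simp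
        then obtain z where z: "coset M X m = coset M X z" "z \<in> msum M K L" by (rule imageE)
        obtain k l where kl: "z = madd M k l" "k \<in> K" "l \<in> L" using z(2) by (rule msumE)
        have c: "k \<in> mcarrier M" "l \<in> mcarrier M" using kl Kc Lc by auto
        have "m \<in> coset M X z" using z coset_self[OF X m] by simp
        then obtain x where x: "x \<in> X" "m = madd M z x" unfolding coset_iff by blast
        have xc: "x \<in> mcarrier M" using x subD(1)[OF X] by blast
        have "m = madd M k (madd M l x)" using x kl c xc assoc by simp
        moreover have "madd M l x \<in> L" using subD(3)[OF Ls] kl x XL by blast
        ultimately show "m \<in> msum M K L" using kl by (simp add: msumI)
      qed
    qed
    then have "L = mcarrier M" using P Ls XL by blast
    then show "N = mcarrier (quot M X)" using NL by simp
  qed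
qed

end



lemma submod_simps[simp]: "mcarrier (submod M N) = N" "mzero (submod M N) = mzero M"
  "madd (submod M N) = madd M" "mneg (submod M N) = mneg M" "msmul (submod M N) = msmul M"
  by (simp_all add: submod_def)

lemma msum_submod[simp]: "msum (submod M N) = msum M"
  by (simp add: msum_def fun_eq_iff)

lemma submodule_submod: "submodule M N \<Longrightarrow> submodule (submod M N) L \<longleftrightarrow> submodule M L \<and> L \<subseteq> N"
  unfolding submodule_def by auto

lemma RM_submod: assumes "RM M" "submodule M N" shows "RM (submod M N)"
proof -
  have r: "right_module M" using assms(1) RM_def by blast
  have n: "N \<subseteq> mcarrier M" "mzero M \<in> N" "\<forall>x\<in>N. \<forall>y\<in>N. madd M x y \<in> N" "\<forall>x\<in>N. mneg M x \<in> N"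
    "\<forall>x\<in>N. \<forall>r. msmul M x r \<in> N" using assms(2) unfolding submodule_def by auto
  show ?thesis unfolding RM_def right_module_def submod_simps
  proof (intro conjI)
  qed (use r n in \<open>auto simp: right_module_def subset_iff\<close>)
qed

context RM
begin

lemma sub_Int: "submodule M A \<Longrightarrow> submodule M B \<Longrightarrow> submodule M (A \<inter> B)"
  unfolding submodule_def by auto

lemma msum_assoc: "A \<subseteq> mcarrier M \<Longrightarrow> B \<subseteq> mcarrier M \<Longrightarrow> C \<subseteq> mcarrier M \<Longrightarrow>
  msum M (msum M A B) C = msum M A (msum M B C)"
  unfolding msum_def by (auto; metis assoc subsetD)

lemma beta_char:
  assumes X: "submodule M X" and Y: "submodule M Y"
  shows "beta_star M X Y \<longleftrightarrow>
    (\<forall>L. submodule M L \<and> X \<subseteq> L \<and> msum M (msum M X Y) L = mcarrier M \<longrightarrow> L = mcarrier M) \<and>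
    (\<forall>L. submodule M L \<and> Y \<subseteq> L \<and> msum M (msum M X Y) L = mcarrier M \<longrightarrow> L = mcarrier M)"
proof -
  have S: "submodule M (msum M X Y)" using msum_sub[OF X Y] .
  have "X \<subseteq> msum M X Y" using msum_upper1[OF Y subD(1)[OF X]] .
  moreover have "Y \<subseteq> msum M X Y" using msum_upper2[OF X subD(1)[OF Y]] .
  ultimately show ?thesis unfolding beta_star_def
    using small_quot_iff[OF X S] small_quot_iff[OF Y S] by simp
qed

end




theorem proposition3p12:
  fixes M :: "('r::ring_1, 'm) rmod" and D :: "'m set"
  assumes "right_module M"
    and "principally_goldie_star_lifting M"
    and "SSP M"
    and "direct_summand M D"
  shows "principally_goldie_star_lifting (submod M D)"
proof -
  interpret RM M using assms(1) by (rule RM.intro)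
  have Ds: "submodule M D" using assms(4) unfolding direct_summand_def by blast
  obtain E0 where E0: "submodule M E0" "msum M D E0 = mcarrier M" "D \<inter> E0 = {mzero M}"
    using assms(4) unfolding direct_summand_def by blast
  have Dc: "D \<subseteq> mcarrier M" using subD(1)[OF Ds] .
  have E0c: "E0 \<subseteq> mcarrier M" using subD(1)[OF E0(1)] .
  interpret N: RM "submod M D" using RM_submod[OF _ Ds] assms(1) RM.intro by blast
  show ?thesis unfolding principally_goldie_star_lifting_def
  proof (intro allI impI)
    fix X assume cX: "cyclic_submodule (submod M D) X"
    obtain x where x: "x \<in> D" "X = {msmul M x r | r. True}"
      using cX[unfolded cyclic_submodule_def] by auto
    have xc: "x \<in> mcarrier M" using x Dc by blast
    have Xs: "submodule M X" using cyclic_sub[OF xc] x by simp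
    have XD: "X \<subseteq> D" using x subD(5)[OF Ds] by auto
    have Xc: "X \<subseteq> mcarrier M" using XD Dc by blast
    have "cyclic_submodule M X" unfolding cyclic_submodule_def using xc x by blast
    then obtain P where P: "direct_summand M P" "beta_star M X P"
      using assms(2)[unfolded principally_goldie_star_lifting_def] by blast
    have Ps: "submodule M P" using P(1) unfolding direct_summand_def by blast
    have Pc: "P \<subseteq> mcarrier M" using subD(1)[OF Ps] .
    have PE0s: "submodule M (msum M P E0)" using msum_sub[OF Ps E0(1)] .
    have "direct_summand M E0" unfolding direct_summand_def
      using E0 Ds msum_comm[OF Dc E0c] by (metis Int_commute)
    then have "direct_summand M (msum M P E0)"
      using assms(3) P(1) unfolding SSP_def by blast
    then obtain E where E: "submodule M E" "msum M (msum M P E0) E = mcarrier M"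
        "msum M P E0 \<inter> E = {mzero M}"
      unfolding direct_summand_def by (elim conjE exE)
    have Ec: "E \<subseteq> mcarrier M" using subD(1)[OF E(1)] .
    define D' where "D' = D \<inter> msum M P E0"
    define F where "F = D \<inter> msum M E E0"
    have D's: "submodule M D'" unfolding D'_def using sub_Int[OF Ds PE0s] .
    have EE0s: "submodule M (msum M E E0)" using msum_sub[OF E(1) E0(1)] .
    have Fs: "submodule M F" unfolding F_def using sub_Int[OF Ds EE0s] .
    have D'D: "D' \<subseteq> D" "F \<subseteq> D" unfolding D'_def F_def by auto
    have D'c: "D' \<subseteq> mcarrier M" using D'D Dc by blast
    have PE0c: "msum M P E0 \<subseteq> mcarrier M" using msum_carrier[OF Pc E0c] .
    have E0PE0: "E0 \<subseteq> msum M P E0" using msum_upper2[OF Ps E0c] .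
    have f1: "msum M D' E0 = msum M P E0"
    proof -
      have "msum M P E0 \<inter> msum M E0 D = msum M E0 (msum M P E0 \<inter> D)"
        using modular[OF E0(1) Ds PE0s E0PE0] .
      moreover have "msum M E0 D = mcarrier M" using E0(2) msum_comm[OF Dc E0c] by simp
      ultimately have "msum M P E0 = msum M E0 D'" using PE0c unfolding D'_def
        by (simp add: Int_absorb1 Int_commute)
      then show ?thesis using msum_comm[OF D'c E0c] by simp
    qed
    have f2: "msum M D' F = D"
    proof -
      have "D \<inter> msum M D' (msum M E E0) = msum M D' (D \<inter> msum M E E0)"
        using modular[OF D's EE0s Ds D'D(1)] .
      moreover have "msum M D' (msum M E E0) = mcarrier M"
      proof -
        have "msum M D' (msum M E E0) = msum M D' (msum M E0 E)" using msum_comm[OF Ec E0c] by simp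
        also have "\<dots> = msum M (msum M D' E0) E" using msum_assoc[OF D'c E0c Ec] by simp
        also have "\<dots> = mcarrier M" using f1 E(2) by simp
        finally show ?thesis .
      qed
      ultimately show ?thesis unfolding F_def using Dc by (simp add: Int_absorb2)
    qed
    have f3: "D' \<inter> F = {mzero M}"
    proof
      show "{mzero M} \<subseteq> D' \<inter> F" using subD(2)[OF D's] subD(2)[OF Fs] by simp
      show "D' \<inter> F \<subseteq> {mzero M}"
      proof
        fix z assume z: "z \<in> D' \<inter> F"
        then have zP: "z \<in> msum M P E0" and zD: "z \<in> D" and zE: "z \<in> msum M E E0"
          unfolding D'_def F_def by auto
        obtain e n where en: "z = madd M e n" "e \<in> E" "n \<in> E0" using zE by (rule msumE)
        have c: "e \<in> mcarrier M" "n \<in> mcarrier M" using en Ec E0c by auto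
        have "e = madd M z (mneg M n)" using en c by simp
        moreover have "madd M z (mneg M n) \<in> msum M P E0"
          using zP en E0PE0 subD(3,4)[OF PE0s] by blast
        ultimately have "e \<in> msum M P E0 \<inter> E" using en by simp
        then have "e = mzero M" using E(3) by blast
        then have "z = n" using en c by simp
        then have "z \<in> D \<inter> E0" using zD en by simp
        then show "z \<in> {mzero M}" using E0(3) by simp
      qed
    qed
    have "direct_summand (submod M D) D'"
      unfolding direct_summand_def submodule_submod[OF Ds]
      using D's D'D f2 f3 Fs by auto
    moreover have "beta_star (submod M D) X D'"
    proof -
      have XsN: "submodule (submod M D) X" using submodule_submod[OF Ds] Xs XD by simp
      have D'sN: "submodule (submod M D) D'" using submodule_submod[OF Ds] D's D'D by simp
      have bM: "(\<forall>L. submodule M L \<and> X \<subseteq> L \<and> msum M (msum M X P) L = mcarrier M \<longrightarrow> L = mcarrier M) \<and>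
        (\<forall>L. submodule M L \<and> P \<subseteq> L \<and> msum M (msum M X P) L = mcarrier M \<longrightarrow> L = mcarrier M)"
        using iffD1[OF beta_char[OF Xs Ps] P(2)] .
      have key: "msum M (msum M X P) (msum M L E0) = mcarrier M"
        if L: "submodule M L" "L \<subseteq> D" "msum M (msum M X D') L = D" for L
      proof -
        have Lc: "L \<subseteq> mcarrier M" using L Dc by blast
        define T where "T = msum M (msum M X P) (msum M L E0)"
        have XPs: "submodule M (msum M X P)" using msum_sub[OF Xs Ps] .
        have LE0s: "submodule M (msum M L E0)" using msum_sub[OF L(1) E0(1)] .
        have Ts: "submodule M T" unfolding T_def using msum_sub[OF XPs LE0s] .
        have XPT: "msum M X P \<subseteq> T" unfolding T_def
          using msum_upper1[OF LE0s msum_carrier[OF Xc Pc]] .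
        have LE0T: "msum M L E0 \<subseteq> T" unfolding T_def
          using msum_upper2[OF XPs msum_carrier[OF Lc E0c]] .
        have XT: "X \<subseteq> T" using XPT msum_upper1[OF Ps Xc] by blast
        have PT: "P \<subseteq> T" using XPT msum_upper2[OF Xs Pc] by blast
        have LT: "L \<subseteq> T" using LE0T msum_upper1[OF E0(1) Lc] by blast
        have E0T: "E0 \<subseteq> T" using LE0T msum_upper2[OF L(1) E0c] by blast
        have "D' \<subseteq> msum M P E0" unfolding D'_def by blast
        also have "\<dots> \<subseteq> T" using msum_least[OF Ts PT E0T] .
        finally have D'T: "D' \<subseteq> T" .
        have "D \<subseteq> T" using L(3) msum_least[OF Ts msum_least[OF Ts XT D'T] LT] by simp
        then have "mcarrier M \<subseteq> T" using E0(2) msum_least[OF Ts _ E0T] by metis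
        moreover have "T \<subseteq> mcarrier M" using subD(1)[OF Ts] .
        ultimately show ?thesis unfolding T_def by blast
      qed
      have bk: "L = D" if L: "submodule M L" "L \<subseteq> D" "msum M L E0 = mcarrier M" for L
      proof -
        have Lc: "L \<subseteq> mcarrier M" using L Dc by blast
        have "D \<inter> msum M L E0 = msum M L (D \<inter> E0)" using modular[OF L(1) E0(1) Ds L(2)] .
        then have "D \<inter> mcarrier M = msum M L {mzero M}" using L(3) E0(3) by simp
        then show ?thesis using msum_zero[OF Lc] Dc by (simp add: Int_absorb2)
      qed
      have c1: "\<forall>L. submodule M L \<and> L \<subseteq> D \<and> X \<subseteq> L \<and> msum M (msum M X D') L = D \<longrightarrow> L = D"
      proof (intro allI impI)
        fix L assume L: "submodule M L \<and> L \<subseteq> D \<and> X \<subseteq> L \<and> msum M (msum M X D') L = D"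
        have Lc: "L \<subseteq> mcarrier M" using L Dc by blast
        have "X \<subseteq> msum M L E0" using L msum_upper1[OF E0(1) Lc] by blast
        moreover have "submodule M (msum M L E0)" using msum_sub[OF _ E0(1), of L] L by blast
        moreover have "msum M (msum M X P) (msum M L E0) = mcarrier M" using key[of L] L by blast
        ultimately have "msum M L E0 = mcarrier M" using conjunct1[OF bM] by blast
        then show "L = D" using bk L by blast
      qed
      have c2: "\<forall>L. submodule M L \<and> L \<subseteq> D \<and> D' \<subseteq> L \<and> msum M (msum M X D') L = D \<longrightarrow> L = D"
      proof (intro allI impI)
        fix L assume L: "submodule M L \<and> L \<subseteq> D \<and> D' \<subseteq> L \<and> msum M (msum M X D') L = D"
        have Lc: "L \<subseteq> mcarrier M" using L Dc by blast
        have LE0s: "submodule M (msum M L E0)" using msum_sub[OF _ E0(1), of L] L by blast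
        have "P \<subseteq> msum M P E0" using msum_upper1[OF E0(1) Pc] .
        also have "\<dots> = msum M D' E0" using f1 by simp
        also have "\<dots> \<subseteq> msum M L E0"
          using msum_least[OF LE0s _ msum_upper2[OF _ E0c, of L]] L msum_upper1[OF E0(1) Lc] by blast
        finally have "P \<subseteq> msum M L E0" .
        moreover have "msum M (msum M X P) (msum M L E0) = mcarrier M" using key[of L] L by blast
        ultimately have "msum M L E0 = mcarrier M" using conjunct2[OF bM] LE0s by blast
        then show "L = D" using bk L by blast
      qed
      show ?thesis
      proof (rule iffD2[OF N.beta_char[OF XsN D'sN]], intro conjI allI impI)
        fix L assume h: "submodule (submod M D) L \<and> X \<subseteq> L \<and>
          msum (submod M D) (msum (submod M D) X D') L = mcarrier (submod M D)"
        then show "L = mcarrier (submod M D)" using c1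
          unfolding submodule_submod[OF Ds] msum_submod submod_simps by blast
      next
        fix L assume h: "submodule (submod M D) L \<and> D' \<subseteq> L \<and>
          msum (submod M D) (msum (submod M D) X D') L = mcarrier (submod M D)"
        then show "L = mcarrier (submod M D)" using c2
          unfolding submodule_submod[OF Ds] msum_submod submod_simps by blast
      qed
    qed
    ultimately show "\<exists>D'. direct_summand (submod M D) D' \<and> beta_star (submod M D) X D'" by blast
  qed
qed


end
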